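(* Let $\beta=\frac{1}{16}$, let $S$ be a string of length $n$, let $d\ge 1$ with $2d\le n$, and let $1\le x<y\le n$. Let $p_1,\dots,p_{2\log n}$ be primes chosen independently and uniformly at random from the primes in $\left[\frac{d}{\beta}\log^2 n,\frac{34d}{\beta}\log^2 n\right]$. If $\mathsf{HAM}(S[x,y],S[x,y]^R)\le 2d$, then with probability at least $1-\frac{1}{n^7}$ every mismatch position of $S[x,y]$ is an isolated mismatch; in particular the number of isolated mismatches equals $\mathsf{HAM}(S[x,y],S[x,y]^R)$.
   Context: $S[x,y]=S[x]S[x+1]\cdots S[y]$; for a string $T$ of length $m$, $T^R$ is its reverse and $\mathsf{HAM}(T,T^R)=|\{i: T[i]\neq T[m+1-i]\}|$. A position $i\in[x,y]$ is a mismatch of $S[x,y]$ if $S[i]\neq S[x+y-i]$. A mismatch $i$ is isolated under $p_j$ if it is the only mismatch position of $S[x,y]$ in its residue class modulo $p_j$; it is an isolated mismatch if it is isolated under $p_j$ for at least one $j\in\{1,\dots,2\log n\}$. $\log$ is base 2. *)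

theory Defs
  imports "HOL-Probability.Probability"
begin

text \<open>Strings are lists; positions are 1-indexed as in the paper: S[i] = S ! (i - 1).\<close>

definition substr :: "'a list \<Rightarrow> nat \<Rightarrow> nat \<Rightarrow> 'a list" where
  "substr S x y = take (y + 1 - x) (drop (x - 1) S)"

definition HAM :: "'a list \<Rightarrow> 'a list \<Rightarrow> nat" where
  "HAM T U = card {i. i < length T \<and> T ! i \<noteq> U ! i}"

definition mismatches :: "'a list \<Rightarrow> nat \<Rightarrow> nat \<Rightarrow> nat set" where
  "mismatches S x y = {i. x \<le> i \<and> i \<le> y \<and> S ! (i - 1) \<noteq> S ! (x + y - i - 1)}"

definition isolated_under :: "'a list \<Rightarrow> nat \<Rightarrow> nat \<Rightarrow> nat \<Rightarrow> nat \<Rightarrow> bool" where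
  "isolated_under S x y p i \<longleftrightarrow> i \<in> mismatches S x y \<and>
     (\<forall>j \<in> mismatches S x y. j mod p = i mod p \<longrightarrow> j = i)"

text \<open>Isolated mismatch w.r.t. the primes ps 0, ..., ps (k-1) (paper: p_1..p_k).\<close>
definition isolated_mismatch :: "'a list \<Rightarrow> nat \<Rightarrow> nat \<Rightarrow> (nat \<Rightarrow> nat) \<Rightarrow> nat \<Rightarrow> nat \<Rightarrow> bool" where
  "isolated_mismatch S x y ps k i \<longleftrightarrow> (\<exists>j < k. isolated_under S x y (ps j) i)"

end

theory Submission
  imports Defs
begin


lemma primes_prod_dvd:
  assumes "finite A" "\<And>p. p \<in> A \<Longrightarrow> prime (p::nat)" "\<And>p. p \<in> A \<Longrightarrow> p dvd c"
  shows "\<Prod>A dvd c"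
  using assms
proof (induction A rule: finite_induct)
  case empty then show ?case by simp
next
  case (insert q A)
  have "\<not> q dvd \<Prod>A"
  proof
    assume "q dvd \<Prod>A"
    then obtain r where "r \<in> A" "q dvd r"
      using prime_dvd_prod_iff[of A q id] insert by auto
    then have "q = r" using insert by (metis primes_dvd_imp_eq insertCI)
    then show False using insert \<open>r \<in> A\<close> by simp
  qed
  then have "coprime q (\<Prod>A)" using insert by (simp add: prime_imp_coprime)
  then show ?case using insert by (simp add: divides_mult)
qed

lemma binom_odd_le: "(2*m+1) choose m \<le> 4^m"
proof -
  have "2 * ((2*m+1) choose m) = ((2*m+1) choose m) + ((2*m+1) choose (m+1))"
    using binomial_symmetric[of m "2*m+1"] by simp
  also have "\<dots> = (\<Sum>k\<in>{m, m+1}. (2*m+1) choose k)" by simp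
  also have "\<dots> \<le> (\<Sum>k\<le>2*m+1. (2*m+1) choose k)"
    by (rule sum_mono2) auto
  also have "\<dots> = 2^(2*m+1)" by (rule choose_row_sum)
  also have "\<dots> = 2 * 4^m" by (simp add: power_mult)
  finally show ?thesis by simp
qed

lemma prime_dvd_binom_odd:
  assumes "prime p" "m+1 < p" "p \<le> 2*m+1"
  shows "p dvd ((2*m+1) choose m)"
proof -
  have e: "fact m * fact (m+1) * ((2*m+1) choose m) = (fact (2*m+1) :: nat)"
    using binomial_fact_lemma[of m "2*m+1"] by (simp add: add.commute mult_2)
  have "p dvd (fact (2*m+1) :: nat)" using assms prime_dvd_fact_iff[of p "2*m+1"] by blast
  then have "p dvd fact m * fact (m+1) * ((2*m+1) choose m)" by (simp only: e)
  moreover have "\<not> p dvd (fact m :: nat)" "\<not> p dvd (fact (m+1) :: nat)"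
    using assms prime_dvd_fact_iff[of p m] prime_dvd_fact_iff[of p "m+1"] by auto
  ultimately show ?thesis using assms(1) by (simp del: fact_Suc add: prime_dvd_mult_iff)
qed

lemma primorial_le: "(\<Prod>{p::nat. prime p \<and> p \<le> n}) \<le> 4^n"
proof (induction n rule: less_induct)
  case (less n)
  show ?case
  proof (cases "n \<le> 2")
    case True
    show ?thesis
    proof (cases "2 \<le> n")
      case True2: True
      have "{p::nat. prime p \<and> p \<le> n} = {2}"
      proof (intro set_eqI iffI)
        fix p assume "p \<in> {p::nat. prime p \<and> p \<le> n}"
        then have "prime p" "p \<le> 2" using True by auto
        then show "p \<in> {2}" using prime_ge_2_nat[of p] by simp
      next
        fix p assume "p \<in> {2::nat}"
        then show "p \<in> {p::nat. prime p \<and> p \<le> n}" using True2 by simp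
      qed
      moreover have "(4::nat)^1 \<le> 4^n" using True2 by (intro power_increasing) auto
      ultimately show ?thesis by simp
    next
      case False2: False
      have e: "{p::nat. prime p \<and> p \<le> n} = {}"
      proof (intro set_eqI iffI)
        fix p assume "p \<in> {p::nat. prime p \<and> p \<le> n}"
        then have "prime p" "p \<le> n" by auto
        then show "p \<in> {}" using prime_ge_2_nat[of p] False2 by simp
      qed simp
      show ?thesis unfolding e by simp
    qed
  next
    case False
    show ?thesis
    proof (cases "even n")
      case True
      have "{p::nat. prime p \<and> p \<le> n} = {p::nat. prime p \<and> p \<le> n - 1}"
      proof (intro set_eqI iffI)
        fix p assume "p \<in> {p::nat. prime p \<and> p \<le> n}"
        then have p: "prime p" "p \<le> n" by auto
        have "p \<noteq> n"
        proof
          assume "p = n"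
          then have "p > 2" using False by simp
          then have "odd p" using prime_odd_nat[OF p(1)] by simp
          then show False using True \<open>p = n\<close> by simp
        qed
        then show "p \<in> {p::nat. prime p \<and> p \<le> n - 1}" using p by auto
      next
        fix p assume "p \<in> {p::nat. prime p \<and> p \<le> n - 1}"
        then show "p \<in> {p::nat. prime p \<and> p \<le> n}" by auto
      qed
      also have "\<Prod>\<dots> \<le> 4^(n-1)" using less.IH[of "n-1"] False by simp
      also have "\<dots> \<le> 4^n" by (intro power_increasing) auto
      finally show ?thesis .
    next
      case odd: False
      then obtain m where n: "n = 2*m+1" by (metis oddE)
      have m1: "m \<ge> 1" using False n by auto
      have split: "{p::nat. prime p \<and> p \<le> n} = {p. prime p \<and> p \<le> m+1} \<union> {p. prime p \<and> m+1 < p \<and> p \<le> 2*m+1}"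
        using n by auto
      have "\<Prod>{p::nat. prime p \<and> p \<le> n} = \<Prod>{p. prime p \<and> p \<le> m+1} * \<Prod>{p. prime p \<and> m+1 < p \<and> p \<le> 2*m+1}"
        unfolding split by (rule prod.union_disjoint) auto
      also have "\<dots> \<le> 4^(m+1) * 4^m"
      proof (rule mult_le_mono)
        show "\<Prod>{p. prime p \<and> p \<le> m+1} \<le> 4^(m+1)" using less.IH[of "m+1"] n m1 by simp
        have "\<Prod>{p. prime p \<and> m+1 < p \<and> p \<le> 2*m+1} dvd ((2*m+1) choose m)"
        proof (rule primes_prod_dvd)
          fix p assume "p \<in> {p. prime p \<and> m+1 < p \<and> p \<le> 2*m+1}"
          then show "p dvd ((2*m+1) choose m)" by (intro prime_dvd_binom_odd) auto
        qed auto
        then have "\<Prod>{p. prime p \<and> m+1 < p \<and> p \<le> 2*m+1} \<le> ((2*m+1) choose m)"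
          by (rule dvd_imp_le) (simp add: zero_less_binomial)
        then show "\<Prod>{p. prime p \<and> m+1 < p \<and> p \<le> 2*m+1} \<le> 4^m" using binom_odd_le order_trans by blast
      qed
      also have "\<dots> = 4^n" using n by (simp add: power_add[symmetric])
      finally show ?thesis .
    qed
  qed
qed




lemma legendre_aux:
  assumes p: "prime (p::nat)"
  shows "n < p^K \<Longrightarrow> multiplicity p (fact n :: nat) = (\<Sum>i\<in>{1..K}. n div p^i)"
proof (induction n)
  case 0 then show ?case by simp
next
  case (Suc n)
  have IH: "multiplicity p (fact n :: nat) = (\<Sum>i\<in>{1..K}. n div p^i)" using Suc by simp
  have pe: "prime_elem p" using p by simp
  have "multiplicity p (fact (Suc n) :: nat) = multiplicity p (Suc n * fact n)" by simp
  also have "\<dots> = multiplicity p (Suc n) + multiplicity p (fact n :: nat)"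
    by (rule prime_elem_multiplicity_mult_distrib[OF pe]) auto
  finally have 1: "multiplicity p (fact (Suc n) :: nat) = multiplicity p (Suc n) + (\<Sum>i\<in>{1..K}. n div p^i)"
    using IH by simp
  define e where "e = multiplicity p (Suc n)"
  have "p^e dvd Suc n" unfolding e_def by (simp add: multiplicity_dvd)
  then have "p^e \<le> Suc n" by (rule dvd_imp_le) simp
  then have "p^e < p^K" using Suc.prems by simp
  then have eK: "e < K" using p prime_gt_1_nat power_less_imp_less_exp by blast
  have set: "{i\<in>{1..K}. p^i dvd Suc n} = {1..e}"
  proof (intro set_eqI iffI)
    fix i assume "i \<in> {i\<in>{1..K}. p^i dvd Suc n}"
    then have "i \<ge> 1" "p^i dvd Suc n" by auto
    then have "i \<le> e" unfolding e_def using p by (intro multiplicity_geI) auto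
    then show "i \<in> {1..e}" using \<open>i \<ge> 1\<close> by simp
  next
    fix i assume i: "i \<in> {1..e}"
    then have "p^i dvd p^e" by (intro le_imp_power_dvd) auto
    then have "p^i dvd Suc n" using \<open>p^e dvd Suc n\<close> by (rule dvd_trans)
    then show "i \<in> {i\<in>{1..K}. p^i dvd Suc n}" using i eK by auto
  qed
  have 2: "(\<Sum>i\<in>{1..K}. Suc n div p^i) = (\<Sum>i\<in>{1..K}. n div p^i + (if p^i dvd Suc n then 1 else 0))"
    by (intro sum.cong refl) (auto simp: div_Suc dvd_eq_mod_eq_0)
  also have "\<dots> = (\<Sum>i\<in>{1..K}. n div p^i) + card {i\<in>{1..K}. p^i dvd Suc n}"
    by (simp add: sum.distrib sum.If_cases Int_def)
  also have "\<dots> = (\<Sum>i\<in>{1..K}. n div p^i) + e" using set by simp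
  finally show ?case using 1 e_def by simp
qed

lemma div_double_le: "(2*m) div (q::nat) \<le> 2 * (m div q) + 1"
proof (cases "q = 0")
  case False
  have h: "q * (m div q) + m mod q = m" by (rule mult_div_mod_eq)
  have gen: "\<And>a b. q * a + b = m \<Longrightarrow> 2*m = q * (2*a) + 2*b" by (simp add: algebra_simps)
  have "2*m = q * (2*(m div q)) + 2*(m mod q)" using gen[OF h] .
  moreover have "2*(m mod q) < 2*q" using False by simp
  ultimately have "2*m < q * (2*(m div q) + 2)" by (simp add: algebra_simps)
  then show ?thesis using False by (simp add: div_less_iff_less_mult less_Suc_eq_le[symmetric] mult.commute)
qed simp

lemma div_double_ge: "2 * (m div (q::nat)) \<le> (2*m) div q"
proof (cases "q = 0")
  case False
  have "2 * (m div q) * q \<le> 2*m" by (simp add: mult.assoc)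
  then have "(2 * (m div q) * q) div q \<le> (2*m) div q" by (rule div_le_mono)
  then show ?thesis using False by simp
qed simp

lemma mult_binom_le:
  assumes p: "prime (p::nat)" and m: "m \<ge> 1"
  shows "p ^ multiplicity p ((2*m) choose m) \<le> 2*m"
proof -
  define K where "K = 2*m"
  have p2: "p \<ge> 2" using p prime_ge_2_nat by blast
  have "2*m < 2^(2*m)" by (rule less_exp)
  also have "\<dots> \<le> p^(2*m)" using p2 by (simp add: power_mono)
  finally have K1: "2*m < p^K" unfolding K_def .
  have K2: "m < p^K" using K1 by simp
  define C where "C = (2*m) choose m"
  have Cpos: "C > 0" unfolding C_def by simp
  have e: "fact m * fact m * C = (fact (2*m) :: nat)"
    using binomial_fact_lemma[of m "2*m"] unfolding C_def by (simp add: mult_2)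
  have pe: "prime_elem p" using p by simp
  have "multiplicity p (fact (2*m) :: nat) = multiplicity p (fact m * fact m * C :: nat)" using e by simp
  also have "\<dots> = multiplicity p (fact m :: nat) + multiplicity p (fact m :: nat) + multiplicity p C"
    using Cpos by (simp add: prime_elem_multiplicity_mult_distrib[OF pe])
  finally have eq: "(\<Sum>i\<in>{1..K}. (2*m) div p^i) = 2 * (\<Sum>i\<in>{1..K}. m div p^i) + multiplicity p C"
    using legendre_aux[OF p K1] legendre_aux[OF p K2] by simp
  define f where "f i = (2*m) div p^i - 2 * (m div p^i)" for i
  have "(\<Sum>i\<in>{1..K}. (2*m) div p^i) = (\<Sum>i\<in>{1..K}. 2 * (m div p^i) + f i)"
    by (intro sum.cong refl) (simp add: f_def div_double_ge)
  also have "\<dots> = 2 * (\<Sum>i\<in>{1..K}. m div p^i) + (\<Sum>i\<in>{1..K}. f i)"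
    by (simp add: sum.distrib sum_distrib_left)
  finally have mC: "multiplicity p C = (\<Sum>i\<in>{1..K}. f i)" using eq by simp
  define S where "S = {i\<in>{1..K}. p^i \<le> 2*m}"
  have "(\<Sum>i\<in>{1..K}. f i) = (\<Sum>i\<in>S. f i)"
  proof (rule sum.mono_neutral_right)
    show "\<forall>i\<in>{1..K} - S. f i = 0"
    proof
      fix i assume "i \<in> {1..K} - S"
      then have "2*m < p^i" by (auto simp: S_def)
      then show "f i = 0" by (simp add: f_def)
    qed
  qed (auto simp: S_def)
  also have "\<dots> \<le> (\<Sum>i\<in>S. 1)"
  proof (rule sum_mono)
    fix i show "f i \<le> 1" using div_double_le[of m "p^i"] by (simp add: f_def)
  qed
  also have "\<dots> = card S" by simp
  finally have le: "multiplicity p C \<le> card S" using mC by simp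
  have "p ^ card S \<le> 2*m"
  proof (rule ccontr)
    assume "\<not> ?thesis"
    then have big: "2*m < p ^ card S" by simp
    have "S \<subseteq> {1..<card S}"
    proof
      fix i assume i: "i \<in> S"
      then have "p^i < p^card S" using big by (auto simp: S_def)
      then have "i < card S" using p2 power_less_imp_less_exp by (metis one_less_numeral_iff order_less_le_trans semiring_norm(76))
      then show "i \<in> {1..<card S}" using i by (auto simp: S_def)
    qed
    then have "card S \<le> card {1..<card S}" by (intro card_mono) auto
    then show False using big m by (cases "card S") auto
  qed
  moreover have "p ^ multiplicity p C \<le> p ^ card S" using le p2 by (simp add: power_increasing)
  ultimately show ?thesis unfolding C_def by simp
qed

lemma binom_le_pi:
  assumes m: "m \<ge> 1"
  shows "(2*m) choose m \<le> (2*m) ^ card {p::nat. prime p \<and> p \<le> 2*m}"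
proof -
  define C where "C = (2*m) choose m"
  have Cpos: "C > 0" unfolding C_def by simp
  have sub: "prime_factors C \<subseteq> {p::nat. prime p \<and> p \<le> 2*m}"
  proof
    fix q assume q: "q \<in> prime_factors C"
    then have qp: "prime q" and "q dvd C" by auto
    then have "q dvd (fact (2*m) :: nat)"
      using binomial_fact_lemma[of m "2*m"] unfolding C_def
      by (metis dvd_mult dvd_trans dvd_refl le_add2 mult_2)
    then show "q \<in> {p::nat. prime p \<and> p \<le> 2*m}" using qp prime_dvd_fact_iff by auto
  qed
  have "C = (\<Prod>q\<in>prime_factors C. q ^ multiplicity q C)"
    using prime_factorization_nat[OF Cpos] .
  also have "\<dots> \<le> (\<Prod>q\<in>prime_factors C. 2*m)"
    by (intro prod_mono) (auto intro: mult_binom_le[OF _ m] simp: C_def)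
  also have "\<dots> = (2*m) ^ card (prime_factors C)" by simp
  also have "\<dots> \<le> (2*m) ^ card {p::nat. prime p \<and> p \<le> 2*m}"
    using m by (intro power_increasing card_mono sub) auto
  finally show ?thesis unfolding C_def .
qed




lemma log2_4: "log 2 (4::real) = 2" using log_pow_cancel[of "2::real" 2] by simp

lemma pi_lower:
  assumes m: "m \<ge> 1"
  shows "real (2*m) \<le> (real (card {p::nat. prime p \<and> p \<le> 2*m}) + 1) * log 2 (2*m)"
proof -
  define c where "c = card {p::nat. prime p \<and> p \<le> 2*m}"
  have "4^m / (2*real m) \<le> real ((2*m) choose m)" using central_binomial_lower_bound m by simp
  also have "\<dots> \<le> real ((2*m) ^ c)" unfolding c_def using binom_le_pi[OF m] by linarith
  finally have "4^m \<le> real (2*m) ^ c * (2 * real m)" using m by (simp add: field_simps)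
  moreover have "real (2*m) ^ (c+1) = real (2*m) ^ c * (2 * real m)" by simp
  ultimately have "(4::real)^m \<le> real (2*m) ^ (c+1)" by linarith
  then have "log 2 ((4::real)^m) \<le> log 2 (real (2*m) ^ (c+1))"
    using m by (intro log_mono) auto
  moreover have "log 2 ((4::real)^m) = 2*m" by (simp add: log_nat_power log2_4)
  moreover have "log 2 (real (2*m) ^ (c+1)) = real (c+1) * log 2 (real (2*m))"
    by (rule log_nat_power) simp
  ultimately show ?thesis unfolding c_def by (simp add: add.commute)
qed

lemma log2_sqrt: "(x::real) \<ge> 0 \<Longrightarrow> log 2 (sqrt x) = log 2 x / 2"
  using log_powr[of 2 x "1/2"] powr_half_sqrt[of x] by simp

lemma log2_16: "log 2 (16::real) = 4" using log_pow_cancel[of "2::real" 4] by simp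
lemma log2_64: "log 2 (64::real) = 6" using log_pow_cancel[of "2::real" 6] by simp

lemma log2_lt: "(s::real) > 0 \<Longrightarrow> log 2 s < s + 1"
proof -
  assume s: "s > 0"
  define n where "n = nat \<lceil>s\<rceil>"
  have sn: "s \<le> real n" unfolding n_def by linarith
  have "n < (2::nat)^n" by (rule less_exp)
  then have "real n < 2^n" by (metis of_nat_less_iff of_nat_numeral of_nat_power)
  have "log 2 s \<le> log 2 (real n)" using s sn by (intro log_mono) auto
  also have "\<dots> < log 2 (2^n)" using \<open>real n < 2^n\<close> s sn by (intro log_less) auto
  also have "\<dots> = n" by (simp add: log_nat_power)
  also have "\<dots> < s + 1" unfolding n_def using ceiling_correct[of s] s by simp
  finally show ?thesis .
qed

lemma pi_upper:
  assumes a: "a \<ge> (2::nat)"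
  shows "real (card {p::nat. prime p \<and> p \<le> a}) \<le> sqrt a + 4 * a / log 2 a"
proof -
  define A where "A = {p::nat. prime p \<and> p \<le> a}"
  define s where "s = sqrt (real a)"
  define A1 where "A1 = {p\<in>A. real p \<le> s}"
  define A2 where "A2 = {p\<in>A. real p > s}"
  have finA: "finite A" unfolding A_def by auto
  have s1: "s > 1" unfolding s_def using a by simp
  have "A = A1 \<union> A2" "A1 \<inter> A2 = {}" unfolding A1_def A2_def by auto
  then have cardA: "card A = card A1 + card A2" using finA
    by (metis card_Un_disjoint finite_Un)
  have "A1 \<subseteq> {1..nat \<lfloor>s\<rfloor>}" unfolding A1_def A_def
    using prime_ge_1_nat by (auto simp: le_nat_floor)
  then have "card A1 \<le> nat \<lfloor>s\<rfloor>" by (metis card_atLeastAtMost card_mono finite_atLeastAtMost diff_Suc_1)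
  then have c1: "real (card A1) \<le> s" using s1 by linarith
  have "s ^ card A2 = (\<Prod>p\<in>A2. s)" by simp
  also have "\<dots> \<le> (\<Prod>p\<in>A2. real p)" unfolding A2_def using s1 by (intro prod_mono) auto
  also have "\<dots> = real (\<Prod>A2)" by simp
  also have "\<Prod>A2 \<le> \<Prod>A"
  proof -
    have sub: "A2 \<subseteq> A" unfolding A2_def by blast
    have "\<Prod>A = \<Prod>(A - A2) * \<Prod>A2" using prod.subset_diff[OF sub finA] .
    moreover have "\<Prod>(A - A2) \<ge> 1" unfolding A_def
      by (intro prod_ge_1) (auto simp: Suc_le_eq prime_gt_0_nat)
    ultimately show ?thesis by simp
  qed
  then have "real (\<Prod>A2) \<le> real ((4::nat)^a)" using primorial_le[of a] unfolding A_def by linarith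
  finally have "s ^ card A2 \<le> 4^a" by simp
  then have "log 2 (s ^ card A2) \<le> log 2 (4^a)" using s1 by (intro log_mono) auto
  then have "card A2 * log 2 s \<le> 2 * a" using s1 by (simp add: log_nat_power log2_4)
  moreover have "log 2 s = log 2 a / 2" unfolding s_def using a by (simp add: log2_sqrt)
  ultimately have "card A2 * log 2 a \<le> 4 * a" by simp
  moreover have "log 2 a > 0" using a by simp
  ultimately have "card A2 \<le> 4 * a / log 2 a" by (simp add: field_simps)
  then show ?thesis using c1 cardA unfolding A_def s_def by simp
qed

lemma primes_interval:
  assumes a: "a \<ge> (16::nat)"
  shows "real (card {p::nat. prime p \<and> a < p \<and> p \<le> 34*a}) \<ge> 2 * (a+1) / (log 2 a)^2"
proof -
  define l where "l = log 2 a"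
  have l4: "l \<ge> 4"
  proof -
    have "log 2 16 \<le> log 2 (real a)" using a by (intro log_mono) auto
    then show ?thesis unfolding l_def by (simp add: log2_16)
  qed
  have "l = 2 * log 2 (sqrt a)" unfolding l_def using a by (simp add: log2_sqrt)
  also have "\<dots> < 2 * (sqrt a + 1)" using log2_lt[of "sqrt a"] a by simp
  also have "\<dots> \<le> 4 * sqrt a"
  proof -
    have "sqrt (real a) \<ge> sqrt 16" using a by (intro real_sqrt_le_mono) simp
    then show ?thesis using a by simp
  qed
  finally have lsq: "l < 4 * sqrt a" .
  have sq4: "sqrt (real a) \<ge> 4"
  proof -
    have "sqrt (real a) \<ge> sqrt 16" using a by (intro real_sqrt_le_mono) simp
    then show ?thesis by simp
  qed
  have sqa: "sqrt (real a) * sqrt (real a) = a" using a by simp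
  have "4 * sqrt (real a) \<le> sqrt (real a) * sqrt (real a)" using sq4 by (intro mult_right_mono) auto
  then have la: "l \<le> a" using lsq sqa by linarith
  define c34 where "c34 = card {p::nat. prime p \<and> p \<le> 34*a}"
  define c1 where "c1 = card {p::nat. prime p \<and> p \<le> a}"
  have split: "{p::nat. prime p \<and> p \<le> 34*a} = {p::nat. prime p \<and> p \<le> a} \<union> {p::nat. prime p \<and> a < p \<and> p \<le> 34*a}"
    by auto
  have "c34 = c1 + card {p::nat. prime p \<and> a < p \<and> p \<le> 34*a}"
    unfolding c34_def c1_def split by (rule card_Un_disjoint) auto
  then have ceq: "real (card {p::nat. prime p \<and> a < p \<and> p \<le> 34*a}) = real c34 - real c1" by simp
  have low: "real (34*a) \<le> (c34 + 1) * log 2 (34*a)"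
    using pi_lower[of "17*a"] a unfolding c34_def by (simp add: ac_simps)
  have "log 2 (34 * a) = log 2 34 + l" unfolding l_def using a by (simp add: log_mult)
  moreover have "log 2 34 \<le> log 2 (64::real)" by (intro log_mono) auto
  ultimately have l34: "log 2 (34*a) \<le> 6 + l" by (simp add: log2_64)
  have l34': "log 2 (34*a) \<le> 5/2 * l" using l34 l4 by simp
  have lpos: "log 2 (34 * real a) > 0" using a by simp
  have "(c34 + 1) * log 2 (34*a) \<le> (c34 + 1) * (5/2 * l)"
    using l34' by (intro mult_left_mono) auto
  then have "real (34 * a) \<le> (c34 + 1) * (5/2 * l)" using low by (meson order_trans)
  then have c34l: "(c34 + 1) * l \<ge> 68/5 * a" by simp
  have up: "c1 \<le> sqrt a + 4 * a / l" using pi_upper[of a] a unfolding c1_def l_def by simp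
  have "sqrt a * l \<le> sqrt a * (4 * sqrt a)" using lsq sq4 by (intro mult_left_mono) auto
  moreover have "sqrt (real a) * (4 * sqrt (real a)) = 4 * a" using sqa by (simp add: algebra_simps)
  ultimately have "sqrt a * l \<le> 4 * a" by linarith
  then have sql: "sqrt a \<le> 4 * a / l" using l4 by (simp add: field_simps)
  have c1l: "c1 * l \<le> 8 * a" using up sql l4 by (simp add: field_simps) 
  have "(real c34 - real c1) * l \<ge> 68/5 * a - l - 8 * a" using c34l c1l by (simp add: algebra_simps)
  then have A: "(real c34 - real c1) * l \<ge> 3 * a" using la by simp
  have B: "2 * (a+1) / l^2 * l \<le> 3 * a"
  proof -
    have "2 * (a+1) / l^2 * l = 2 * (a+1) / l" using l4 by (simp add: power2_eq_square)
    also have "\<dots> \<le> 2 * (a+1) / 4" using l4 by (intro divide_left_mono) auto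
    also have "\<dots> \<le> 3 * a" using a by simp
    finally show ?thesis .
  qed
  have "2 * (a+1) / l^2 * l \<le> (real c34 - real c1) * l" using A B by linarith
  then have "2 * (a+1) / l^2 \<le> real c34 - real c1" by (rule mult_right_le_imp_le) (use l4 in simp)
  then show ?thesis using ceq unfolding l_def by (simp add: add.commute)
qed




lemma pow16_ge:
  assumes n: "n \<ge> (1::nat)" and k: "real k \<ge> 2 * log 2 n"
  shows "real n ^ 8 \<le> 16 ^ k"
proof -
  have np: "real n > 0" using n by simp
  have "real n ^ 8 = (2 powr log 2 n) powr 8" using np by (simp add: powr_realpow)
  also have "\<dots> = 2 powr (log 2 n * 8)" by (simp add: powr_powr)
  also have "\<dots> \<le> 2 powr (4 * real k)" using k by (intro powr_mono) auto
  also have "\<dots> = ((2::real) powr 4) powr real k" by (simp only: powr_powr)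
  also have "(2::real) powr 4 = 16" by simp
  also have "(16::real) powr real k = 16 ^ k" by (simp add: powr_realpow)
  finally show ?thesis .
qed

lemma prob_part:
  fixes P M :: "nat set" and N :: "nat \<Rightarrow> nat set" and n k :: nat
  assumes P: "finite P" "P \<noteq> {}" and M: "finite M"
    and bad: "\<And>i. i \<in> M \<Longrightarrow> real (card (P \<inter> N i)) \<le> real (card P) / 16"
    and cM: "card M \<le> n" and k: "real k \<ge> 2 * log 2 n" and n: "n \<ge> 1"
  shows "measure_pmf.prob (Pi_pmf {..<k} 0 (\<lambda>_. pmf_of_set P)) (UNIV - (\<Union>i\<in>M. Pi {..<k} (\<lambda>_. N i)))
           \<ge> 1 - 1 / real n ^ 7"
proof -
  define D where "D = Pi_pmf {..<k} (0::nat) (\<lambda>_. pmf_of_set P)"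
  have np: "real n > 0" using n by simp
  have each: "measure_pmf.prob D (Pi {..<k} (\<lambda>_. N i)) \<le> 1 / real n ^ 8" if i: "i \<in> M" for i
  proof -
    define r where "r = real (card (P \<inter> N i)) / real (card P)"
    have cP: "real (card P) > 0" using P by (simp add: card_gt_0_iff)
    have "measure_pmf.prob D (Pi {..<k} (\<lambda>_. N i)) = (\<Prod>j\<in>{..<k}. measure_pmf.prob (pmf_of_set P) (N i))"
      unfolding D_def by (rule measure_Pi_pmf_Pi) simp
    also have "\<dots> = r ^ k" using P by (simp add: measure_pmf_of_set r_def)
    also have "\<dots> \<le> (1/16) ^ k"
    proof (rule power_mono)
      show "r \<le> 1/16" unfolding r_def using bad[OF i] cP by (simp add: field_simps)
      show "0 \<le> r" unfolding r_def by simp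
    qed
    also have "\<dots> = 1 / 16 ^ k" by (simp add: power_one_over)
    also have "\<dots> \<le> 1 / real n ^ 8" using pow16_ge[OF n k] np by (intro divide_left_mono) auto
    finally show ?thesis .
  qed
  have "measure_pmf.prob D (\<Union>i\<in>M. Pi {..<k} (\<lambda>_. N i)) \<le> (\<Sum>i\<in>M. measure_pmf.prob D (Pi {..<k} (\<lambda>_. N i)))"
    by (rule measure_pmf.finite_measure_subadditive_finite) (use M in auto)
  also have "\<dots> \<le> (\<Sum>i\<in>M. 1 / real n ^ 8)" by (intro sum_mono each)
  also have "\<dots> = card M / real n ^ 8" by simp
  also have "\<dots> \<le> real n / real n ^ 8" using cM np by (intro divide_right_mono) auto
  also have "\<dots> = 1 / real n ^ 7" using np by (simp add: field_simps eval_nat_numeral)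
  finally have U: "measure_pmf.prob D (\<Union>i\<in>M. Pi {..<k} (\<lambda>_. N i)) \<le> 1 / real n ^ 7" .
  have "measure_pmf.prob D (UNIV - (\<Union>i\<in>M. Pi {..<k} (\<lambda>_. N i))) = 1 - measure_pmf.prob D (\<Union>i\<in>M. Pi {..<k} (\<lambda>_. N i))"
    using measure_pmf.prob_compl[of "\<Union>i\<in>M. Pi {..<k} (\<lambda>_. N i)" D] by simp
  then show ?thesis using U unfolding D_def by simp
qed



lemma card_mismatches:
  assumes "1 \<le> x" "x < y" "y \<le> length S"
  shows "card (mismatches S x y) = HAM (substr S x y) (rev (substr S x y))"
proof -
  define T where "T = substr S x y"
  have lenT: "length T = y + 1 - x" unfolding T_def substr_def using assms by simp
  have Tn: "T ! j = S ! (x - 1 + j)" if "j < y + 1 - x" for j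
    unfolding T_def substr_def using that assms by simp
  have rTn: "rev T ! j = S ! (y - 1 - j)" if "j < y + 1 - x" for j
  proof -
    have "rev T ! j = T ! (length T - Suc j)" using that lenT by (simp add: rev_nth)
    also have "\<dots> = S ! (x - 1 + (y + 1 - x - Suc j))" using that lenT Tn[of "y + 1 - x - Suc j"] by simp
    also have "x - 1 + (y + 1 - x - Suc j) = y - 1 - j" using that assms by simp
    finally show ?thesis .
  qed
  define J where "J = {j. j < length T \<and> T ! j \<noteq> rev T ! j}"
  have "mismatches S x y = (\<lambda>j. j + x) ` J"
  proof (intro set_eqI iffI)
    fix i assume "i \<in> mismatches S x y"
    then have i: "x \<le> i" "i \<le> y" "S ! (i - 1) \<noteq> S ! (x + y - i - 1)" unfolding mismatches_def by auto
    have j: "i - x < y + 1 - x" using i assms by simp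
    have "T ! (i - x) \<noteq> rev T ! (i - x)"
      using Tn[OF j] rTn[OF j] i assms by (simp add: algebra_simps)
    then have "i - x \<in> J" unfolding J_def using j lenT by simp
    then show "i \<in> (\<lambda>j. j + x) ` J" using i by (intro image_eqI[of _ _ "i - x"]) auto
  next
    fix i assume "i \<in> (\<lambda>j. j + x) ` J"
    then obtain j where j: "j \<in> J" "i = j + x" by auto
    then have jl: "j < y + 1 - x" and ne: "T ! j \<noteq> rev T ! j" unfolding J_def using lenT by auto
    have "S ! (i - 1) \<noteq> S ! (x + y - i - 1)"
      using ne Tn[OF jl] rTn[OF jl] j assms by (simp add: algebra_simps)
    then show "i \<in> mismatches S x y" unfolding mismatches_def using j jl assms by auto
  qed
  then have "card (mismatches S x y) = card J" by (simp add: card_image)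
  then show ?thesis unfolding HAM_def J_def T_def by simp
qed

lemma count_prime_divisors:
  assumes D: "D > (0::nat)" "real D < n" and L: "L > 1"
  shows "real (card {p. prime p \<and> L \<le> real p \<and> p dvd D}) * log 2 L \<le> log 2 n"
proof -
  define T where "T = {p. prime p \<and> L \<le> real p \<and> p dvd D}"
  have finT: "finite T" unfolding T_def using D
    by (metis (no_types, lifting) finite_divisors_nat mem_Collect_eq rev_finite_subset subsetI)
  have "\<Prod>T dvd D" by (rule primes_prod_dvd[OF finT]) (auto simp: T_def)
  then have "\<Prod>T \<le> D" using D by (intro dvd_imp_le) auto
  have "L ^ card T = (\<Prod>p\<in>T. L)" by simp
  also have "\<dots> \<le> (\<Prod>p\<in>T. real p)" using L by (intro prod_mono) (auto simp: T_def)
  also have "\<dots> = real (\<Prod>T)" by simp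
  also have "\<dots> \<le> real D" using \<open>\<Prod>T \<le> D\<close> by (simp only: of_nat_le_iff)
  also have "\<dots> < n" using D by simp
  finally have "L ^ card T < n" .
  then have "log 2 (L ^ card T) \<le> log 2 n" using L by (intro log_mono) auto
  then show ?thesis using L unfolding T_def by (simp add: log_nat_power)
qed

lemma bad_bound:
  fixes M P :: "nat set" and L :: real and n :: nat
  assumes M: "finite M" "M \<subseteq> {x..y}" "y - x < n" "card M \<le> 2*d" "i \<in> M"
    and L: "L = 16 * d * (log 2 n)^2" "L \<ge> 16"
    and P: "P = {p. prime p \<and> L \<le> real p \<and> real p \<le> 34*L}" "finite P"
        "real (card P) \<ge> 2*L/(log 2 L)^2"
  shows "real (card (P \<inter> {p. \<exists>j\<in>M. j \<noteq> i \<and> j mod p = i mod p})) \<le> real (card P) / 16"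
proof (cases "P \<inter> {p. \<exists>j\<in>M. j \<noteq> i \<and> j mod p = i mod p} = {}")
  case True then show ?thesis by simp
next
  case False
  define dist :: "nat \<Rightarrow> nat" where "dist j = (if i \<le> j then j - i else i - j)" for j
  have distpos: "dist j > 0" "dist j < n" if "j \<in> M" "j \<noteq> i" for j
  proof -
    have "i \<in> {x..y}" "j \<in> {x..y}" using M that by auto
    then show "dist j > 0" "dist j < n" using that M unfolding dist_def by auto
  qed
  have dvd: "p dvd dist j" if "j mod p = i mod p" for j p
    using that unfolding dist_def
    by (auto simp: mod_eq_dvd_iff_nat) (metis mod_eq_dvd_iff_nat nat_le_linear)
  define T where "T j = {p. prime p \<and> L \<le> real p \<and> p dvd dist j}" for j
  have sub: "P \<inter> {p. \<exists>j\<in>M. j \<noteq> i \<and> j mod p = i mod p} \<subseteq> (\<Union>j\<in>M - {i}. T j)"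
    unfolding P(1) T_def using dvd by auto
  from False obtain p0 j0 where p0: "p0 \<in> P" "j0 \<in> M" "j0 \<noteq> i" "j0 mod p0 = i mod p0" by auto
  have "p0 dvd dist j0" using dvd p0 by simp
  then have "p0 \<le> dist j0" using distpos[OF p0(2,3)] by (intro dvd_imp_le) auto
  then have Ln: "L < n" using p0 distpos[OF p0(2,3)] P(1) by simp
  have n2: "n \<ge> 2" using Ln L by simp
  define ln where "ln = log 2 n"
  define lL where "lL = log 2 L"
  have lL4: "lL \<ge> 4"
  proof -
    have "log 2 16 \<le> log 2 L" using L by (intro log_mono) auto
    moreover have "log 2 (16::real) = 4" using log_pow_cancel[of "2::real" 4] by simp
    ultimately show ?thesis unfolding lL_def by simp
  qed
  have lLn: "lL \<le> ln" unfolding lL_def ln_def using Ln L by (intro log_mono) auto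
  have cT: "real (card (T j)) * lL \<le> ln" if "j \<in> M - {i}" for j
  proof -
    have "dist j > 0" "real (dist j) < real n" using distpos[of j] that by auto
    moreover have "L > 1" using L by simp
    ultimately show ?thesis unfolding T_def lL_def ln_def by (rule count_prime_divisors)
  qed
  have cT': "real (card (T j)) \<le> ln / lL" if "j \<in> M - {i}" for j
    using cT[OF that] lL4 by (simp add: field_simps)
  have "card (P \<inter> {p. \<exists>j\<in>M. j \<noteq> i \<and> j mod p = i mod p}) \<le> card (\<Union>j\<in>M - {i}. T j)"
  proof (rule card_mono[OF _ sub])
    show "finite (\<Union>j\<in>M - {i}. T j)"
    proof (intro finite_UN_I)
      fix j assume j: "j \<in> M - {i}"
      have "T j \<subseteq> {..dist j}" unfolding T_def using distpos[of j] j by (auto intro: dvd_imp_le)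
      then show "finite (T j)" by (rule finite_subset) simp
    qed (use M in auto)
  qed
  also have "\<dots> \<le> (\<Sum>j\<in>M - {i}. card (T j))" using M by (intro card_UN_le) auto
  finally have "real (card (P \<inter> {p. \<exists>j\<in>M. j \<noteq> i \<and> j mod p = i mod p})) \<le> real (\<Sum>j\<in>M - {i}. card (T j))"
    by (simp only: of_nat_le_iff)
  also have "\<dots> = (\<Sum>j\<in>M - {i}. real (card (T j)))" by simp
  also have "\<dots> \<le> (\<Sum>j\<in>M - {i}. ln / lL)" by (intro sum_mono cT')
  also have "\<dots> = real (card (M - {i})) * (ln / lL)" by simp
  also have "\<dots> \<le> (2 * d) * (ln / lL)"
  proof (rule mult_right_mono)
    have "card (M - {i}) \<le> card M" using M by (intro card_mono) auto
    then show "real (card (M - {i})) \<le> real (2*d)" using M by linarith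
    show "0 \<le> ln / lL" using lLn lL4 by simp
  qed
  also have "\<dots> \<le> 2 * L / lL^2 / 16"
  proof -
    have "(2 * d) * (ln / lL) = (2 * d * ln * lL) / lL^2" using lL4 by (simp add: power2_eq_square)
    also have "\<dots> \<le> (2 * d * ln * ln) / lL^2" using lLn lL4 n2
      by (intro divide_right_mono mult_left_mono) auto
    also have "\<dots> = 2 * L / lL^2 / 16" using L(1) unfolding ln_def by (simp add: power2_eq_square)
    finally show ?thesis by simp
  qed
  also have "\<dots> \<le> real (card P) / 16" using P(3) unfolding lL_def by simp
  finally show ?thesis by simp
qed


theorem lemma5p2:
  fixes S :: "'a list" and n d x y :: nat and \<beta> :: real
  assumes "\<beta> = 1 / 16"
    and "length S = n"
    and "d \<ge> 1" and "2 * d \<le> n"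
    and "1 \<le> x" and "x < y" and "y \<le> n"
    and "HAM (substr S x y) (rev (substr S x y)) \<le> 2 * d"
  defines "k \<equiv> nat \<lceil>2 * log 2 (real n)\<rceil>"
    and "P \<equiv> {p::nat. prime p \<and> real d / \<beta> * (log 2 (real n))\<^sup>2 \<le> real p
                   \<and> real p \<le> 34 * real d / \<beta> * (log 2 (real n))\<^sup>2}"
  shows "measure_pmf.prob (Pi_pmf {..<k} 0 (\<lambda>_. pmf_of_set P))
           {ps. (\<forall>i \<in> mismatches S x y. isolated_mismatch S x y ps k i)
                \<and> card {i. isolated_mismatch S x y ps k i}
                    = HAM (substr S x y) (rev (substr S x y))}
         \<ge> 1 - 1 / real n ^ 7"
proof -
  note ass = assms
  have n2: "n \<ge> 2" using ass by simp
  define ln where "ln = log 2 (real n)"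
  have ln1: "ln \<ge> 1"
  proof -
    have "log 2 (2::real) \<le> log 2 (real n)" using n2 by (intro log_mono) auto
    then show ?thesis unfolding ln_def by simp
  qed
  define L where "L = 16 * real d * ln^2"
  have Lalt: "real d / \<beta> * (log 2 (real n))\<^sup>2 = L" "34 * real d / \<beta> * (log 2 (real n))\<^sup>2 = 34 * L"
    unfolding L_def ln_def ass(1) by simp_all
  have Pdef: "P = {p. prime p \<and> L \<le> real p \<and> real p \<le> 34 * L}"
    unfolding P_def Lalt ..
  have "1 \<le> ln^2" using ln1 by (simp add: one_le_power)
  moreover have "real d \<ge> 1" using ass by simp
  ultimately have "1 \<le> real d * ln^2" by (metis mult_mono' one_le_numeral mult_1 zero_le_one)
  then have L16: "L \<ge> 16" unfolding L_def by simp
  define a where "a = nat \<lfloor>L\<rfloor>"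
  have aL: "real a \<le> L" "L < real a + 1" unfolding a_def using L16 by linarith+
  have a16: "a \<ge> 16" unfolding a_def using L16 by linarith
  define Q where "Q = {p::nat. prime p \<and> a < p \<and> p \<le> 34*a}"
  have QP: "Q \<subseteq> P"
  proof
    fix p assume "p \<in> Q"
    then have p: "prime p" "a + 1 \<le> p" "p \<le> 34 * a" unfolding Q_def by auto
    have "L \<le> real p" using aL p(2) by linarith
    moreover have "real p \<le> 34 * L" using aL p(3) by linarith
    ultimately show "p \<in> P" unfolding Pdef using p by simp
  qed
  have finP: "finite P"
  proof (rule finite_subset)
    show "P \<subseteq> {..nat \<lceil>34 * L\<rceil>}" unfolding Pdef by (auto, linarith)
  qed simp
  have cQ: "real (card Q) \<ge> 2 * (real a + 1) / (log 2 (real a))^2"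
    unfolding Q_def by (rule primes_interval[OF a16])
  have la4: "log 2 (real a) \<ge> 4"
  proof -
    have "log 2 16 \<le> log 2 (real a)" using a16 by (intro log_mono) auto
    then show ?thesis by (simp add: log2_16)
  qed
  have laL: "log 2 (real a) \<le> log 2 L" using aL a16 by (intro log_mono) auto
  have "2 * L / (log 2 L)^2 \<le> 2 * (real a + 1) / (log 2 (real a))^2"
  proof (rule frac_le)
    show "0 \<le> 2 * (real a + 1)" by simp
    show "2 * L \<le> 2 * (real a + 1)" using aL by simp
    show "0 < (log 2 (real a))\<^sup>2" using la4 by simp
    show "(log 2 (real a))\<^sup>2 \<le> (log 2 L)\<^sup>2" using la4 laL by (intro power_mono) auto
  qed
  also have "\<dots> \<le> real (card Q)" using cQ by simp
  also have "\<dots> \<le> real (card P)" using QP finP by (simp add: card_mono)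
  finally have cP: "real (card P) \<ge> 2 * L / (log 2 L)^2" .
  have lL: "log 2 L > 0" using L16 by simp
  have "(log 2 L)^2 > 0" using lL by simp
  then have "2 * L / (log 2 L)^2 > 0" using L16 by (intro divide_pos_pos) auto
  then have "card P > 0" using cP by linarith
  then have Pne: "P \<noteq> {}" by auto
  define M where "M = mismatches S x y"
  have MS: "M \<subseteq> {x..y}" unfolding M_def mismatches_def by auto
  have finM: "finite M" using MS by (rule finite_subset) simp
  have cardM: "card M = HAM (substr S x y) (rev (substr S x y))"
    unfolding M_def using ass by (intro card_mismatches) auto
  have cM2d: "card M \<le> 2 * d" using cardM ass by simp
  define N where "N i = {p. \<not> isolated_under S x y p i}" for i
  have bad: "real (card (P \<inter> N i)) \<le> real (card P) / 16" if i: "i \<in> M" for i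
  proof -
    have Neq: "N i = {p. \<exists>j\<in>M. j \<noteq> i \<and> j mod p = i mod p}"
      unfolding N_def isolated_under_def using i M_def by auto
    have ymx: "y - x < n" using ass by simp
    have L16d: "L = 16 * real d * (log 2 (real n))^2" unfolding L_def ln_def ..
    have "real (card (P \<inter> {p. \<exists>j\<in>M. j \<noteq> i \<and> j mod p = i mod p})) \<le> real (card P) / 16"
      by (rule bad_bound[OF finM MS ymx cM2d i L16d L16 Pdef finP cP])
    then show ?thesis unfolding Neq .
  qed
  have kge: "real k \<ge> 2 * log 2 (real n)"
  proof -
    have "2 * log 2 (real n) \<ge> 0" using ln1 unfolding ln_def by simp
    then show ?thesis unfolding k_def using ceiling_correct[of "2 * log 2 (real n)"] by linarith
  qed
  have cMn: "card M \<le> n" using cM2d ass by simp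
  have main: "measure_pmf.prob (Pi_pmf {..<k} 0 (\<lambda>_. pmf_of_set P)) (UNIV - (\<Union>i\<in>M. Pi {..<k} (\<lambda>_. N i)))
           \<ge> 1 - 1 / real n ^ 7"
    by (rule prob_part[OF finP Pne finM bad cMn kge]) (use n2 in auto)
  have sub: "UNIV - (\<Union>i\<in>M. Pi {..<k} (\<lambda>_. N i)) \<subseteq>
           {ps. (\<forall>i \<in> mismatches S x y. isolated_mismatch S x y ps k i)
                \<and> card {i. isolated_mismatch S x y ps k i}
                    = HAM (substr S x y) (rev (substr S x y))}"
  proof
    fix ps assume "ps \<in> UNIV - (\<Union>i\<in>M. Pi {..<k} (\<lambda>_. N i))"
    then have iso: "\<forall>i\<in>M. isolated_mismatch S x y ps k i"
      unfolding isolated_mismatch_def N_def Pi_def by auto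
    have "{i. isolated_mismatch S x y ps k i} = M"
      using iso unfolding isolated_mismatch_def isolated_under_def M_def by auto
    then show "ps \<in> {ps. (\<forall>i \<in> mismatches S x y. isolated_mismatch S x y ps k i)
                \<and> card {i. isolated_mismatch S x y ps k i}
                    = HAM (substr S x y) (rev (substr S x y))}"
      using iso cardM unfolding M_def by simp
  qed
  have "measure_pmf.prob (Pi_pmf {..<k} 0 (\<lambda>_. pmf_of_set P)) (UNIV - (\<Union>i\<in>M. Pi {..<k} (\<lambda>_. N i)))
      \<le> measure_pmf.prob (Pi_pmf {..<k} 0 (\<lambda>_. pmf_of_set P))
           {ps. (\<forall>i \<in> mismatches S x y. isolated_mismatch S x y ps k i)
                \<and> card {i. isolated_mismatch S x y ps k i}
                    = HAM (substr S x y) (rev (substr S x y))}"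
    by (rule measure_pmf.finite_measure_mono[OF sub]) simp
  then show ?thesis using main by linarith
qed

end
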